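(* Assume that $1<c<2$ and let $m\ge 2$ be an integer. Let $L_k$ denote the subword complexity of the sequence $(\lfloor n^c\rfloor \bmod m)_{n\ge 0}$. There exists a constant $C_1$ such that $L_k\le C_1 k^r$ for all $k\ge 1$, for all $r>\max\{4/(2-c),6\}$. Moreover, there is a constant $C_2>0$ such that $L_k\ge C_2 k^3$ for all $k\ge1$.
   Context: For a sequence $u$ with values in $\{0,1,\ldots,m-1\}$ and a positive integer $k$, the subword complexity $L_k$ is the number of distinct blocks $B\in\{0,\ldots,m-1\}^k$ that occur as a contiguous subsequence $(u_n,u_{n+1},\ldots,u_{n+k-1})$ of $u$. *)

theory Defs
  imports Complex_Main
begin

definition subword_complexity :: "(nat \<Rightarrow> nat) \<Rightarrow> nat \<Rightarrow> nat" where
  "subword_complexity u k = card {map (\<lambda>i. u (n + i)) [0..<k] | n. True}"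

end

theory Submission
  imports Defs "HOL-Number_Theory.Number_Theory"
begin

definition fd :: "real \<Rightarrow> real \<Rightarrow> real" where "fd c x = c * x powr (c - 1)"

lemma chord_bounds:
  assumes "1 < c" "0 < a" "a < b"
  shows "fd c a * (b - a) < b powr c - a powr c \<and> b powr c - a powr c < fd c b * (b - a)"
proof -
  have "\<And>x. a \<le> x \<Longrightarrow> x \<le> b \<Longrightarrow> DERIV (\<lambda>x. x powr c) x :> fd c x"
    using assms by (auto simp: fd_def intro!: has_real_derivative_powr)
  from MVT2[OF assms(3) this] obtain z where z: "a < z" "z < b" "b powr c - a powr c = (b - a) * fd c z" by auto
  have "fd c a < fd c z" "fd c z < fd c b" using z assms by (auto simp: fd_def intro!: powr_less_mono2)
  then show ?thesis using z assms by (simp add: mult.commute)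
qed

lemma fd_mono:
  assumes "1 < c" "0 < a" "a \<le> b" shows "fd c a \<le> fd c b"
  using assms by (auto simp: fd_def intro!: powr_mono2)

lemma fd_growth:
  assumes "1 < c" "c < 2" "0 < a" "0 \<le> h"
  shows "fd c (a + h) - fd c a \<le> c * (c - 1) * a powr (c - 2) * h"
proof (cases "h = 0")
  case True then show ?thesis by simp
next
  case False
  then have ab: "a < a + h" using assms by simp
  have "\<And>x. a \<le> x \<Longrightarrow> x \<le> a + h \<Longrightarrow> DERIV (fd c) x :> c * ((c - 1) * x powr (c - 1 - 1))"
    using assms unfolding fd_def by (auto intro!: derivative_eq_intros has_real_derivative_powr)
  from MVT2[OF ab this] obtain z where z: "a < z" "z < a + h"
    "fd c (a + h) - fd c a = (a + h - a) * (c * ((c - 1) * z powr (c - 1 - 1)))" by auto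
  have "z powr (c - 2) \<le> a powr (c - 2)"
    using z assms by (intro powr_mono2') auto
  then have "c * ((c - 1) * z powr (c - 2)) \<le> c * ((c - 1) * a powr (c - 2))"
    using assms by (intro mult_left_mono) auto
  then have "h * (c * ((c - 1) * z powr (c - 2))) \<le> h * (c * ((c - 1) * a powr (c - 2)))"
    using assms by (intro mult_left_mono) auto
  then show ?thesis using z(3) by (simp add: algebra_simps)
qed

lemma floor_diff_bounds:
  fixes x y :: real
  shows "real_of_int (\<lfloor>y\<rfloor> - \<lfloor>x\<rfloor> - 1) < y - x" "y - x < real_of_int (\<lfloor>y\<rfloor> - \<lfloor>x\<rfloor> + 1)"
  by linarith+

lemma key_P1:
  fixes c :: real and n k :: nat
  assumes c: "1 < c" and n: "0 < n" and cond: "real k ^ 2 * (fd c (real (n + k)) - fd c (real n)) \<le> 1"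
  and pq: "p < q" "q < k" and pq': "p' < q'" "q' < k"
  defines "D \<equiv> \<lambda>i::nat. \<lfloor>real (n + i) powr c\<rfloor>"
  shows "(D q' - D p' - 1) * int (q - p) \<le> (D q - D p + 1) * int (q' - p')"
proof -
  define y where "y = (\<lambda>i::nat. real (n + i) powr c)"
  have D: "D = (\<lambda>i. \<lfloor>y i\<rfloor>)" unfolding D_def y_def by simp
  have c1: "y q' - y p' < fd c (real (n + q')) * (real q' - real p')"
    using chord_bounds[OF c, of "real (n + p')" "real (n + q')"] pq' n unfolding y_def by auto
  have c2: "fd c (real (n + p)) * (real q - real p) < y q - y p"
    using chord_bounds[OF c, of "real (n + p)" "real (n + q)"] pq n unfolding y_def by auto
  have m1: "fd c (real (n + q')) \<le> fd c (real (n + k))" using fd_mono[OF c] n pq' by simp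
  have m2: "fd c (real n) \<le> fd c (real (n + p))" using fd_mono[OF c] n by simp
  have m3: "fd c (real n) \<le> fd c (real (n + k))" using fd_mono[OF c] n by simp
  define A where "A = real_of_int (D q' - D p' - 1)"
  define B where "B = real_of_int (D q - D p + 1)"
  have A: "A < y q' - y p'" unfolding A_def D using floor_diff_bounds(1) .
  have B: "y q - y p < B" unfolding B_def D using floor_diff_bounds(2) .
  have pos1: "0 < real q - real p" "0 < real q' - real p'" using pq pq' by auto
  have "A * (real q - real p) < (y q' - y p') * (real q - real p)"
    using A pos1 by (intro mult_strict_right_mono) auto
  also have "\<dots> \<le> fd c (real (n + k)) * (real q' - real p') * (real q - real p)"
    using c1 m1 pos1 by (intro mult_right_mono) (auto intro: order.trans[OF less_imp_le] mult_right_mono)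
  finally have X: "A * (real q - real p) < fd c (real (n + k)) * (real q' - real p') * (real q - real p)" .
  have "fd c (real n) * (real q - real p) \<le> fd c (real (n + p)) * (real q - real p)"
    using m2 pos1 by (intro mult_right_mono) auto
  with c2 have "fd c (real n) * (real q - real p) \<le> y q - y p" by linarith
  then have "fd c (real n) * (real q - real p) * (real q' - real p') \<le> (y q - y p) * (real q' - real p')"
    using pos1 by (intro mult_right_mono) auto
  also have "\<dots> < B * (real q' - real p')" using B pos1 by (intro mult_strict_right_mono) auto
  finally have Y: "fd c (real n) * (real q - real p) * (real q' - real p') < B * (real q' - real p')" .
  have "(real q - real p) * (real q' - real p') \<le> real k * real k"
    using pq pq' pos1 by (intro mult_mono) auto
  then have "(fd c (real (n + k)) - fd c (real n)) * ((real q - real p) * (real q' - real p'))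
      \<le> (fd c (real (n + k)) - fd c (real n)) * (real k * real k)"
    using m3 by (intro mult_left_mono) auto
  also have "\<dots> \<le> 1" using cond by (simp add: power2_eq_square algebra_simps)
  finally have Z: "(fd c (real (n + k)) - fd c (real n)) * ((real q - real p) * (real q' - real p')) \<le> 1" .
  have "A * (real q - real p) - B * (real q' - real p') < 1"
    using X Y Z by (simp add: algebra_simps)
  then have "real_of_int ((D q' - D p' - 1) * int (q - p) - (D q - D p + 1) * int (q' - p')) < 1"
    using pq pq' unfolding A_def B_def by (simp add: of_nat_diff)
  then show ?thesis by linarith
qed

lemma key_P2:
  fixes c :: real and n k :: nat
  assumes c: "1 < c" and n: "0 < n" and i: "i1 < i2" "i2 < i3"
  defines "D \<equiv> \<lambda>i::nat. \<lfloor>real (n + i) powr c\<rfloor>"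
  shows "(D i2 - D i1 - 1) * int (i3 - i2) \<noteq> (D i3 - D i2 + 1) * int (i2 - i1)"
proof -
  define y where "y = (\<lambda>i::nat. real (n + i) powr c)"
  have D: "D = (\<lambda>i. \<lfloor>y i\<rfloor>)" unfolding D_def y_def by simp
  have c1: "y i2 - y i1 < fd c (real (n + i2)) * (real i2 - real i1)"
    using chord_bounds[OF c, of "real (n + i1)" "real (n + i2)"] i n unfolding y_def by auto
  have c2: "fd c (real (n + i2)) * (real i3 - real i2) < y i3 - y i2"
    using chord_bounds[OF c, of "real (n + i2)" "real (n + i3)"] i n unfolding y_def by auto
  define A where "A = real_of_int (D i2 - D i1 - 1)"
  define B where "B = real_of_int (D i3 - D i2 + 1)"
  have A: "A < y i2 - y i1" unfolding A_def D using floor_diff_bounds(1) .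
  have B: "y i3 - y i2 < B" unfolding B_def D using floor_diff_bounds(2) .
  have pos1: "0 < real i2 - real i1" "0 < real i3 - real i2" using i by auto
  have "A * (real i3 - real i2) < (y i2 - y i1) * (real i3 - real i2)"
    using A pos1 by (intro mult_strict_right_mono) auto
  also have "\<dots> \<le> fd c (real (n + i2)) * (real i2 - real i1) * (real i3 - real i2)"
    using c1 pos1 by (intro mult_right_mono) auto
  also have "\<dots> = fd c (real (n + i2)) * (real i3 - real i2) * (real i2 - real i1)" by simp
  also have "\<dots> \<le> (y i3 - y i2) * (real i2 - real i1)"
    using c2 pos1 by (intro mult_right_mono) auto
  also have "\<dots> < B * (real i2 - real i1)" using B pos1 by (intro mult_strict_right_mono) auto
  finally have "A * (real i3 - real i2) < B * (real i2 - real i1)" .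
  then have "real_of_int ((D i2 - D i1 - 1) * int (i3 - i2)) < real_of_int ((D i3 - D i2 + 1) * int (i2 - i1))"
    using i unfolding A_def B_def by (simp add: of_nat_diff)
  then show ?thesis by linarith
qed

definition W :: "int \<Rightarrow> nat \<Rightarrow> int \<Rightarrow> nat \<Rightarrow> nat \<Rightarrow> nat \<Rightarrow> int" where
  "W a b J s1 s2 i = (a * int i - J) div int b +
     (if int b dvd (a * int i - J) \<and> s1 \<le> i \<and> i < s2 then 0 else 1)"

lemma struct_lemma:
  fixes D :: "nat \<Rightarrow> int" and k :: nat
  assumes k: "2 \<le> k"
  and H1: "\<And>p q p' q'. p < q \<Longrightarrow> q < k \<Longrightarrow> p' < q' \<Longrightarrow> q' < k \<Longrightarrow>
              (D q' - D p' - 1) * int (q - p) \<le> (D q - D p + 1) * int (q' - p')"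
  and H2: "\<And>i1 i2 i3. i1 < i2 \<Longrightarrow> i2 < i3 \<Longrightarrow> i3 < k \<Longrightarrow>
              (D i2 - D i1 - 1) * int (i3 - i2) \<noteq> (D i3 - D i2 + 1) * int (i2 - i1)"
  shows "\<exists>a b J s1 s2. 1 \<le> b \<and> b < k \<and> 0 \<le> J \<and> J \<le> int b \<and> s1 \<le> k \<and> s2 \<le> k \<and>
           (\<forall>i<k. D i - D 0 = W a b J s1 s2 i)"
proof -
  define S where "S = {(p, q). p < q \<and> q < k}"
  define \<rho> where "\<rho> = (\<lambda>(p, q). real_of_int (D q - D p + 1) / real (q - p))"
  have finS: "finite S" unfolding S_def
    by (rule finite_subset[of _ "{..<k} \<times> {..<k}"]) auto
  have "(0, 1) \<in> S" using k unfolding S_def by auto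
  then have neS: "S \<noteq> {}" by auto
  define pq where "pq = arg_min_on \<rho> S"
  obtain p0 q0 where pq0: "pq = (p0, q0)" by (cases pq)
  have inS: "(p0, q0) \<in> S" using arg_min_if_finite(1)[OF finS neS, of \<rho>] pq0 pq_def by simp
  have minS: "\<And>p q. (p, q) \<in> S \<Longrightarrow> \<rho> (p0, q0) \<le> \<rho> (p, q)"
    using arg_min_if_finite(2)[OF finS neS, of \<rho>] pq0 pq_def by (metis not_le)
  have pq0': "p0 < q0" "q0 < k" using inS unfolding S_def by auto
  define a where "a = D q0 - D p0 + 1"
  define b where "b = q0 - p0"
  have b1: "1 \<le> b" "b < k" using pq0' unfolding b_def by auto
  have i: "a * int (q - p) \<le> int b * (D q - D p + 1)" if "p < q" "q < k" for p q
  proof -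
    have "\<rho> (p0, q0) \<le> \<rho> (p, q)" using minS that unfolding S_def by auto
    then have "real_of_int a / real b \<le> real_of_int (D q - D p + 1) / real (q - p)"
      unfolding \<rho>_def a_def b_def by simp
    then have "real_of_int a * real (q - p) \<le> real_of_int (D q - D p + 1) * real b"
      using b1 that by (simp add: divide_simps)
    then have "real_of_int (a * int (q - p)) \<le> real_of_int (int b * (D q - D p + 1))"
      by (simp add: mult.commute)
    then show ?thesis by linarith
  qed
  have ii: "int b * (D q - D p - 1) \<le> a * int (q - p)" if "p < q" "q < k" for p q
    using H1[OF pq0' that] unfolding a_def b_def by (simp add: mult.commute)
  define E where "E = (\<lambda>i. int b * D i - a * int i)"
  have Ediff: "\<bar>E i - E j\<bar> \<le> int b" if "i < k" "j < k" for i j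
  proof -
    have *: "E q - E p \<le> int b \<and> E p - E q \<le> int b" if "p < q" "q < k" for p q
    proof -
      have "E q - E p = int b * (D q - D p) - a * int (q - p)" unfolding E_def
        using that by (simp add: of_nat_diff algebra_simps)
      then show ?thesis using i[OF that] ii[OF that] by (simp add: algebra_simps)
    qed
    consider "i < j" | "i = j" | "j < i" by linarith
    then show ?thesis using *[of i j] *[of j i] that by cases auto
  qed
  define \<mu> where "\<mu> = Min (E ` {..<k})"
  define Mn where "Mn = {i. i < k \<and> E i = \<mu>}"
  have finMn: "finite Mn" unfolding Mn_def by auto
  have \<mu>le: "\<mu> \<le> E i" if "i < k" for i unfolding \<mu>_def using that by auto
  have "\<mu> \<in> E ` {..<k}" unfolding \<mu>_def using k by (intro Min_in) (auto simp: lessThan_empty_iff)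
  then have neMn: "Mn \<noteq> {}" unfolding Mn_def by auto
  define s1 where "s1 = Min Mn"
  define t where "t = Max Mn"
  have s1: "s1 \<in> Mn" "\<And>i. i \<in> Mn \<Longrightarrow> s1 \<le> i" unfolding s1_def using finMn neMn by auto
  have t: "t \<in> Mn" "\<And>i. i \<in> Mn \<Longrightarrow> i \<le> t" unfolding t_def using finMn neMn by auto
  define J where "J = E 0 - \<mu>"
  have J: "0 \<le> J" "J \<le> int b"
  proof -
    show "0 \<le> J" unfolding J_def using \<mu>le[of 0] k by auto
    have "\<bar>E 0 - E s1\<bar> \<le> int b" using Ediff[of 0 s1] s1 k unfolding Mn_def by auto
    then show "J \<le> int b" unfolding J_def using s1 unfolding Mn_def by auto
  qed
  have form: "D i - D 0 = W a b J s1 (Suc t) i" if ik: "i < k" for i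
  proof -
    define v where "v = E i - \<mu>"
    have v: "0 \<le> v" "v \<le> int b"
      using \<mu>le[OF ik] Ediff[of i s1] ik s1 unfolding v_def Mn_def by auto
    have eq: "a * int i - J = int b * (D i - D 0) - v"
      unfolding v_def J_def E_def by (simp add: algebra_simps)
    have bpos: "0 < int b" using b1 by simp
    consider "v = 0" | "v = int b" | "0 < v \<and> v < int b" using v by linarith
    then show ?thesis
    proof cases
      case 1
      then have "i \<in> Mn" unfolding v_def Mn_def using ik by auto
      then have "s1 \<le> i" "i < Suc t" using s1(2) t(2) by (auto simp: less_Suc_eq_le)
      moreover have "(a * int i - J) div int b = D i - D 0" using eq 1 bpos by simp
      moreover have "int b dvd (a * int i - J)" using eq 1 by simp
      ultimately show ?thesis unfolding W_def by simp
    next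
      case 2
      have dv: "(a * int i - J) = int b * (D i - D 0 - 1)" using eq 2 by (simp add: algebra_simps)
      then have "(a * int i - J) div int b = D i - D 0 - 1" using bpos by simp
      moreover have "\<not> (s1 \<le> i \<and> i < Suc t)"
      proof
        assume as: "s1 \<le> i \<and> i < Suc t"
        have "E i \<noteq> \<mu>" using 2 b1 unfolding v_def by auto
        then have "i \<noteq> s1" "i \<noteq> t" using s1 t unfolding Mn_def by auto
        then have lt: "s1 < i" "i < t" using as by auto
        have tk: "t < k" using t unfolding Mn_def by auto
        have e1: "E i - E s1 = int b" using 2 s1 unfolding v_def Mn_def by auto
        have e2: "E t - E i = - int b" using 2 t unfolding v_def Mn_def by auto
        have f1: "int b * (D i - D s1 - 1) = a * int (i - s1)"
          using e1 lt unfolding E_def by (simp add: of_nat_diff algebra_simps)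
        have f2: "int b * (D t - D i + 1) = a * int (t - i)"
          using e2 lt unfolding E_def by (simp add: of_nat_diff algebra_simps)
        have "int b * ((D i - D s1 - 1) * int (t - i)) = int b * ((D t - D i + 1) * int (i - s1))"
          using f1 f2 by (metis mult.assoc mult.commute)
        then have "(D i - D s1 - 1) * int (t - i) = (D t - D i + 1) * int (i - s1)"
          using bpos by simp
        then show False using H2[OF lt tk] by simp
      qed
      ultimately show ?thesis unfolding W_def by simp
    next
      case 3
      have eq2: "a * int i - J = (int b - v) + int b * (D i - D 0 - 1)" using eq by (simp add: algebra_simps)
      have "(a * int i - J) div int b = D i - D 0 - 1"
        unfolding eq2 using 3 by (simp add: div_pos_pos_trivial)
      moreover have "\<not> int b dvd (a * int i - J)"
      proof
        assume "int b dvd (a * int i - J)"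
        then have "int b dvd (int b - v)" unfolding eq2 by (simp add: dvd_add_left_iff)
        then show False using 3 zdvd_not_zless[of "int b - v" "int b"] by auto
      qed
      ultimately show ?thesis unfolding W_def by simp
    qed
  qed
  have "s1 \<le> k" "Suc t \<le> k" using s1 t unfolding Mn_def by auto
  then show ?thesis using b1 J form by blast
qed

lemma W_shift:
  assumes "0 < b"
  shows "W (a + int m * int b * t) b J s1 s2 i = W a b J s1 s2 i + int m * t * int i"
proof -
  have e: "(a + int m * int b * t) * int i - J = (a * int i - J) + int b * (int m * t * int i)"
    by (simp add: algebra_simps)
  have d: "((a * int i - J) + int b * (int m * t * int i)) div int b = (a * int i - J) div int b + int m * t * int i"
    using assms by simp
  have dv: "int b dvd ((a * int i - J) + int b * (int m * t * int i)) \<longleftrightarrow> int b dvd (a * int i - J)"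
    by (simp add: dvd_add_left_iff)
  show ?thesis unfolding W_def e d dv by simp
qed

definition Gblk :: "nat \<Rightarrow> nat \<Rightarrow> nat \<times> nat \<times> nat \<times> nat \<times> nat \<times> nat \<Rightarrow> nat list" where
  "Gblk m k = (\<lambda>(d0, a, b, J, s1, s2). map (\<lambda>i. nat ((int d0 + W (int a) b (int J) s1 s2 i) mod int m)) [0..<k])"

lemma upper_count:
  fixes c :: real and m k N :: nat
  assumes c: "1 < c" and m: "m \<ge> 2" and k: "k \<ge> 2" and N: "N \<ge> 1"
  and cond: "\<And>n. n \<ge> N \<Longrightarrow> real k ^ 2 * (fd c (real (n + k)) - fd c (real n)) \<le> 1"
  shows "subword_complexity (\<lambda>n::nat. nat \<lfloor>(real n) powr c\<rfloor> mod m) k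
           \<le> N + m * (m * k) * k * k * (k + 1) * (k + 1)"
proof -
  define u where "u = (\<lambda>n::nat. nat \<lfloor>(real n) powr c\<rfloor> mod m)"
  define blk where "blk = (\<lambda>n. map (\<lambda>i. u (n + i)) [0..<k])"
  define B where "B = {0..<m} \<times> {0..<m*k} \<times> {0..<k} \<times> {0..<k} \<times> {0..k} \<times> {0..k}"
  have sub: "{map (\<lambda>i. u (n + i)) [0..<k] | n. True} \<subseteq> blk ` {..<N} \<union> Gblk m k ` B"
  proof
    fix x assume "x \<in> {map (\<lambda>i. u (n + i)) [0..<k] | n. True}"
    then obtain n where x: "x = blk n" unfolding blk_def by auto
    show "x \<in> blk ` {..<N} \<union> Gblk m k ` B"
    proof (cases "n < N")
      case True then show ?thesis using x by auto
    next
      case False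
      then have nN: "n \<ge> N" by simp
      have n0: "0 < n" using nN N by simp
      define D where "D = (\<lambda>i::nat. \<lfloor>real (n + i) powr c\<rfloor>)"
      have "\<exists>a b J s1 s2. 1 \<le> b \<and> b < k \<and> 0 \<le> J \<and> J \<le> int b \<and> s1 \<le> k \<and> s2 \<le> k \<and>
           (\<forall>i<k. D i - D 0 = W a b J s1 s2 i)"
        unfolding D_def
        apply (rule struct_lemma[OF k])
        subgoal for p q p' q' by (rule key_P1[OF c n0 cond[OF nN]])
        subgoal for i1 i2 i3 by (rule key_P2[OF c n0])
        done
      then obtain a b J s1 s2 where st: "1 \<le> b" "b < k" "0 \<le> J" "J \<le> int b" "s1 \<le> k" "s2 \<le> k"
        "\<And>i. i < k \<Longrightarrow> D i - D 0 = W a b J s1 s2 i" by blast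
      define mb where "mb = int m * int b"
      have mbpos: "0 < mb" using m st unfolding mb_def by simp
      define a' where "a' = a mod mb"
      define tt where "tt = a div mb"
      have a'_rng: "0 \<le> a'" "a' < mb" unfolding a'_def using mbpos by auto
      have aeq: "a = a' + int m * int b * tt" unfolding a'_def tt_def mb_def by simp
      have Dnn: "0 \<le> D i" for i unfolding D_def by simp
      define d0 where "d0 = nat (D 0 mod int m)"
      have tup: "(d0, nat a', b, nat J, s1, s2) \<in> B"
      proof -
        have "d0 < m" unfolding d0_def using m by (simp add: nat_less_iff)
        moreover have "nat a' < m * k"
        proof -
          have "a' < int m * int k" using a'_rng st m unfolding mb_def
            by (smt (verit, best) mult_le_cancel_left_pos of_nat_0_less_iff of_nat_less_iff pos2 zero_less_imp_eq_int order.strict_trans1 less_imp_le)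
          then show ?thesis using a'_rng by (simp add: nat_less_iff)
        qed
        moreover have "nat J < k" using st by linarith
        ultimately show ?thesis unfolding B_def using st by auto
      qed
      have "blk n = Gblk m k (d0, nat a', b, nat J, s1, s2)"
        unfolding blk_def Gblk_def prod.case
      proof (rule map_cong[OF refl])
        fix i assume "i \<in> set [0..<k]"
        then have ik: "i < k" by simp
        have Di: "0 \<le> D i" by (rule Dnn)
        have "u (n + i) = nat (D i) mod nat (int m)"
          unfolding u_def D_def by simp
        also have "\<dots> = nat (D i mod int m)" using Di by (simp add: nat_mod_distrib)
        also have "D i = (D 0 + W a' b J s1 s2 i) + int m * (tt * int i)"
        proof -
          have "W a b J s1 s2 i = W a' b J s1 s2 i + int m * tt * int i"
            unfolding aeq using W_shift[of b a' m tt J s1 s2 i] st(1) by simp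
          then show ?thesis using st(7)[OF ik] by (simp add: algebra_simps)
        qed
        also have "((D 0 + W a' b J s1 s2 i) + int m * (tt * int i)) mod int m
                 = (D 0 + W a' b J s1 s2 i) mod int m"
          by (rule mod_mult_self2)
        also have "(D 0 + W a' b J s1 s2 i) mod int m = (D 0 mod int m + W a' b J s1 s2 i) mod int m"
          by (rule mod_add_left_eq[symmetric])
        also have "D 0 mod int m = int d0" unfolding d0_def using m by simp
        finally show "u (n + i) = nat ((int d0 + W (int (nat a')) b (int (nat J)) s1 s2 i) mod int m)"
          using a'_rng st(3) by simp
      qed
      then show ?thesis using x tup by auto
    qed
  qed
  have "subword_complexity u k \<le> card (blk ` {..<N} \<union> Gblk m k ` B)"
    unfolding subword_complexity_def by (rule card_mono[OF _ sub]) (auto simp: B_def)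
  also have "\<dots> \<le> card (blk ` {..<N}) + card (Gblk m k ` B)" by (rule card_Un_le)
  also have "\<dots> \<le> N + card B"
    using card_image_le[of "{..<N}" blk] card_image_le[of B "Gblk m k"] by (auto simp: B_def)
  also have "card B = m * (m * k) * k * k * (k + 1) * (k + 1)" unfolding B_def
    by (simp only: card_cartesian_product card_atLeastLessThan card_atLeastAtMost) (simp add: algebra_simps)
  finally show ?thesis unfolding u_def by simp
qed

lemma blocks_sub:
  assumes "m > 0"
  shows "{map (\<lambda>i. (\<lambda>n::nat. nat \<lfloor>(real n) powr c\<rfloor> mod m) (n + i)) [0..<k] | n. True}
     \<subseteq> {xs. set xs \<subseteq> {..<m} \<and> length xs = k}"
  using assms by auto

lemma sc_finite:
  assumes "m > 0"
  shows "finite {map (\<lambda>i. (\<lambda>n::nat. nat \<lfloor>(real n) powr c\<rfloor> mod m) (n + i)) [0..<k] | n. True}"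
  by (rule finite_subset[OF blocks_sub[OF assms]]) (rule finite_lists_length_eq, simp)

lemma sc_le_pow:
  assumes "m > 0"
  shows "subword_complexity (\<lambda>n::nat. nat \<lfloor>(real n) powr c\<rfloor> mod m) k \<le> m ^ k"
proof -
  have "subword_complexity (\<lambda>n::nat. nat \<lfloor>(real n) powr c\<rfloor> mod m) k \<le> card {xs. set xs \<subseteq> {..<m} \<and> length xs = k}"
    unfolding subword_complexity_def
    by (rule card_mono[OF _ blocks_sub[OF assms]]) (rule finite_lists_length_eq, simp)
  then show ?thesis by (simp add: card_lists_length_eq)
qed

lemma cond_from_N:
  fixes c :: real and k n :: nat
  assumes c: "1 < c" "c < 2" and k: "k \<ge> 1"
  and n: "real n \<ge> (2 * real k ^ 3) powr (1 / (2 - c))"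
  shows "real k ^ 2 * (fd c (real (n + k)) - fd c (real n)) \<le> 1"
proof -
  have pos: "0 < (2 * real k ^ 3) powr (1 / (2 - c))" using k by simp
  then have n0: "0 < real n" using n by linarith
  have "real n powr (2 - c) \<ge> ((2 * real k ^ 3) powr (1 / (2 - c))) powr (2 - c)"
    using n pos c by (intro powr_mono2) auto
  also have "((2 * real k ^ 3) powr (1 / (2 - c))) powr (2 - c) = 2 * real k ^ 3"
    using c k by (simp add: powr_powr)
  finally have np: "2 * real k ^ 3 \<le> real n powr (2 - c)" .
  have npc: "real n powr (c - 2) = 1 / real n powr (2 - c)"
    using n0 by (simp add: powr_minus_divide[symmetric])
  have g: "fd c (real (n + k)) - fd c (real n) \<le> c * (c - 1) * real n powr (c - 2) * real k"
    using fd_growth[OF c n0, of "real k"] by simp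
  have cc0: "c * (c - 1) \<le> 2 * 1" using c by (intro mult_mono) auto
  then have cc: "c * (c - 1) \<le> 2" by simp
  have "real k ^ 2 * (fd c (real (n + k)) - fd c (real n)) \<le> real k ^ 2 * (c * (c - 1) * real n powr (c - 2) * real k)"
    using g by (intro mult_left_mono) auto
  also have "\<dots> = c * (c - 1) * (real k ^ 3 / real n powr (2 - c))"
    unfolding npc by (simp add: power3_eq_cube power2_eq_square)
  also have "\<dots> \<le> 2 * (real k ^ 3 / real n powr (2 - c))"
    using cc n0 by (intro mult_right_mono) auto
  also have "\<dots> \<le> 1" using np n0 by (simp add: divide_simps)
  finally show ?thesis .
qed

lemma upper_final:
  fixes c r :: real and m :: nat
  assumes c: "1 < c" "c < 2" and m: "m \<ge> 2" and r: "r > max (4 / (2 - c)) 6"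
  shows "\<exists>C1::real. \<forall>k::nat. k \<ge> 1 \<longrightarrow>
     real (subword_complexity (\<lambda>n::nat. nat \<lfloor>(real n) powr c\<rfloor> mod m) k) \<le> C1 * (real k) powr r"
proof (intro exI allI impI)
  define C1 where "C1 = 2 powr (1 / (2 - c)) + 1 + 4 * real m ^ 2"
  fix k :: nat assume k: "k \<ge> 1"
  have r6: "6 < r" and r4: "4 / (2 - c) < r" using r by auto
  have kr: "1 \<le> real k powr r" using k r6 by (simp add: ge_one_powr_ge_zero)
  have "real m * 1 \<le> real m * real m" using m by (intro mult_left_mono) auto
  then have "real m \<le> real m ^ 2" by (simp add: power2_eq_square)
  then have C1ge: "real m \<le> C1" unfolding C1_def using powr_ge_zero[of 2 "1 / (2 - c)"] by linarith
  show "real (subword_complexity (\<lambda>n::nat. nat \<lfloor>(real n) powr c\<rfloor> mod m) k) \<le> C1 * real k powr r"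
  proof (cases "k = 1")
    case True
    have "subword_complexity (\<lambda>n::nat. nat \<lfloor>(real n) powr c\<rfloor> mod m) k \<le> m"
      using sc_le_pow[of m c k] m True by simp
    then show ?thesis using True C1ge by simp
  next
    case False
    then have k2: "k \<ge> 2" using k by simp
    define X where "X = (2 * real k ^ 3) powr (1 / (2 - c))"
    define N where "N = nat \<lceil>X\<rceil>"
    have Xpos: "0 < X" unfolding X_def using k by simp
    have N1: "N \<ge> 1" unfolding N_def using Xpos by linarith
    have NX: "real N \<le> X + 1" unfolding N_def using Xpos by linarith
    have cond: "real k ^ 2 * (fd c (real (n + k)) - fd c (real n)) \<le> 1" if "n \<ge> N" for n
    proof -
      have "X \<le> real N" unfolding N_def by linarith
      also have "\<dots> \<le> real n" using that by simp
      finally show ?thesis using cond_from_N[OF c k] unfolding X_def by simp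
    qed
    note uc = upper_count[OF c(1) m k2 N1 cond]
    have X2: "X = 2 powr (1 / (2 - c)) * real k powr (3 / (2 - c))"
    proof -
      have e: "real k ^ 3 = real k powr 3" using k by (simp add: powr_realpow)
      have "(real k ^ 3) powr (1 / (2 - c)) = real k powr (3 / (2 - c))"
      proof -
        have "(real k ^ 3) powr (1 / (2 - c)) = (real k powr 3) powr (1 / (2 - c))" by (simp only: e)
        also have "\<dots> = real k powr (3 * (1 / (2 - c)))" by (rule powr_powr)
        also have "3 * (1 / (2 - c)) = 3 / (2 - c)" by simp
        finally show ?thesis .
      qed
      moreover have "X = 2 powr (1 / (2 - c)) * (real k ^ 3) powr (1 / (2 - c))"
        unfolding X_def by (rule powr_mult)
      ultimately show ?thesis by (simp del: powr_realpow)
    qed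
    have "real k powr (3 / (2 - c)) \<le> real k powr r"
    proof (rule powr_mono)
      have "3 / (2 - c) \<le> 4 / (2 - c)" using c by (simp add: divide_right_mono)
      then show "3 / (2 - c) \<le> r" using r4 by linarith
    qed (use k in simp)
    then have Xb: "X \<le> 2 powr (1 / (2 - c)) * real k powr r" unfolding X2
      by (intro mult_left_mono) auto
    have box: "real (m * (m * k) * k * k * (k + 1) * (k + 1)) \<le> 4 * real m ^ 2 * real k powr r"
    proof -
      have "real k ^ 3 * (real k + 1) ^ 2 \<le> real k ^ 3 * (2 * real k) ^ 2"
        using k by (intro mult_left_mono power_mono) auto
      also have "\<dots> = 4 * real k ^ 5" by (simp add: eval_nat_numeral algebra_simps)
      also have "real k ^ 5 = real k powr 5" using k by (simp add: powr_realpow)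
      also have "\<dots> \<le> real k powr r" using k r6 by (intro powr_mono) auto
      finally have A: "real k ^ 3 * (real k + 1) ^ 2 \<le> 4 * real k powr r" by simp
      have "real (m * (m * k) * k * k * (k + 1) * (k + 1)) = real m ^ 2 * (real k ^ 3 * (real k + 1) ^ 2)"
        by (simp add: power2_eq_square power3_eq_cube algebra_simps)
      also have "\<dots> \<le> real m ^ 2 * (4 * real k powr r)" using A by (intro mult_left_mono) auto
      finally show ?thesis by simp
    qed
    have "real (subword_complexity (\<lambda>n::nat. nat \<lfloor>(real n) powr c\<rfloor> mod m) k)
        \<le> real N + real (m * (m * k) * k * k * (k + 1) * (k + 1))"
      using uc by (metis of_nat_add of_nat_le_iff)
    also have "\<dots> \<le> (2 powr (1 / (2 - c)) * real k powr r + 1) + 4 * real m ^ 2 * real k powr r"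
      using NX Xb box by linarith
    also have "\<dots> \<le> C1 * real k powr r" unfolding C1_def using kr by (simp add: algebra_simps)
    finally show ?thesis .
  qed
qed

lemma floor_target:
  fixes Y :: int and m J p q r i :: nat and E v :: real
  assumes q: "0 < q" and E: "0 \<le> E" "E < 1 / (2 * real q)"
  and v: "v = real_of_int Y + real m * real J * real i + (real p * real i + real r + 1/2) / real q + E"
  shows "\<lfloor>v\<rfloor> = Y + int (m * J * i) + int ((p * i + r) div q)"
proof -
  define d where "d = (p * i + r) div q"
  define s where "s = (p * i + r) mod q"
  have ds: "p * i + r = q * d + s" unfolding d_def s_def by simp
  have s: "s < q" unfolding s_def using q by simp
  have "real p * real i + real r = real q * real d + real s"
    using arg_cong[OF ds, of real] by simp
  then have e1: "(real p * real i + real r + 1/2) / real q = real d + (real s + 1/2) / real q"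
    using q by (simp add: field_simps)
  have s1: "real s + 1 \<le> real q" using s by simp
  have "(real s + 1/2) / real q + E < (real s + 1/2) / real q + 1 / (2 * real q)" using E by simp
  also have "\<dots> = (real s + 1) / real q" using q by (simp add: field_simps)
  also have "\<dots> \<le> 1" using s1 q by simp
  finally have up: "(real s + 1/2) / real q + E < 1" .
  have lo: "0 \<le> (real s + 1/2) / real q + E" using E q by simp
  have "v = real_of_int (Y + int (m * J * i) + int d) + ((real s + 1/2) / real q + E)"
    unfolding v e1 by simp
  then show ?thesis unfolding d_def[symmetric] using up lo
    by (intro floor_unique) auto
qed

lemma small_A:
  fixes c e :: real
  assumes c: "1 < c" "c < 2" and e: "0 < e"
  shows "\<exists>X0\<ge>1. \<forall>x\<ge>X0. c * (c - 1) * x powr (c - 2) \<le> e"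
proof -
  define X0 where "X0 = max 1 ((e / 2) powr (1 / (c - 2)))"
  have "\<forall>x\<ge>X0. c * (c - 1) * x powr (c - 2) \<le> e"
  proof (intro allI impI)
    fix x assume x: "X0 \<le> x"
    have p: "0 < (e / 2) powr (1 / (c - 2))" using e by simp
    have "x powr (c - 2) \<le> ((e / 2) powr (1 / (c - 2))) powr (c - 2)"
      using x p c unfolding X0_def by (intro powr_mono2') auto
    also have "\<dots> = e / 2" using c e by (simp add: powr_powr)
    finally have xp: "x powr (c - 2) \<le> e / 2" .
    have cc0: "c * (c - 1) \<le> 2 * 1" using c by (intro mult_mono) auto
    have "c * (c - 1) * x powr (c - 2) \<le> 2 * (e / 2)"
      using cc0 xp by (intro mult_mono) auto
    then show "c * (c - 1) * x powr (c - 2) \<le> e" by simp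
  qed
  then show ?thesis by (intro exI[of _ X0]) (auto simp: X0_def)
qed

lemma fd_inverse:
  assumes c: "1 < c" and T: "0 < T"
  shows "fd c ((T / c) powr (1 / (c - 1))) = T"
  using c T by (simp add: fd_def powr_powr)

lemma fd_strict:
  assumes "1 < c" "0 < a" "a < b" shows "fd c a < fd c b"
  using assms by (auto simp: fd_def intro!: powr_less_mono2)

lemma discrete_ivt:
  fixes g :: "nat \<Rightarrow> real"
  assumes step: "\<And>l. l < L \<Longrightarrow> g (Suc l) < g l + \<eta>"
  and y: "g 0 < y" "y \<le> g L"
  shows "\<exists>l\<le>L. y \<le> g l \<and> g l < y + \<eta>"
proof -
  define l where "l = (LEAST l. y \<le> g l)"
  have gl: "y \<le> g l" unfolding l_def by (rule LeastI[of _ L]) (rule y(2))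
  have lL: "l \<le> L" unfolding l_def by (rule Least_le) (rule y(2))
  have l0: "l \<noteq> 0" using gl y(1) by (cases l) auto
  then obtain l' where l': "l = Suc l'" by (cases l) auto
  have "\<not> y \<le> g l'" unfolding l_def using l' l_def not_less_Least by (metis lessI)
  then have "g l' < y" by simp
  moreover have "g l < g l' + \<eta>" using step[of l'] l' lL by simp
  ultimately show ?thesis using gl lL by (intro exI[of _ l]) auto
qed

lemma realize:
  fixes c :: real and m k p q r :: nat
  assumes c: "1 < c" "c < 2" and m: "m \<ge> 1" and k: "k \<ge> 1"
  and q: "1 \<le> q" "q \<le> k" and pq: "p < q" and rq: "r < q"
  shows "\<exists>n::nat. \<forall>i<k. \<lfloor>real (n + i) powr c\<rfloor> mod int m
            = (\<lfloor>real n powr c\<rfloor> + int ((p * i + r) div q)) mod int m"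
proof -
  define f where "f = (\<lambda>x::real. x powr c)"
  define \<delta> where "\<delta> = 1 / (21 * real k ^ 2)"
  define \<eta> where "\<eta> = 1 / (7 * real k)"
  have kpos: "0 < real k" using k by simp
  have \<delta>pos: "0 < \<delta>" unfolding \<delta>_def using kpos by simp
  have \<eta>pos: "0 < \<eta>" unfolding \<eta>_def using kpos by simp
  define L where "L = nat \<lceil>2 / \<delta>\<rceil>"
  define M where "M = q * (L + 1)"
  have L: "2 / \<delta> \<le> real L" unfolding L_def by linarith
  define e0 where "e0 = min (\<delta> / (real M + 1)) (\<eta> / real k ^ 2)"
  have e0pos: "0 < e0" unfolding e0_def using \<delta>pos \<eta>pos kpos by simp
  obtain X0 where X0: "X0 \<ge> 1" "\<And>x. x \<ge> X0 \<Longrightarrow> c * (c - 1) * x powr (c - 2) \<le> e0"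
    using small_A[OF c e0pos] by blast
  define J where "J = nat \<lceil>fd c X0 / real m\<rceil>"
  have mJ: "fd c X0 \<le> real m * real J"
  proof -
    have "fd c X0 / real m \<le> real J" unfolding J_def by linarith
    then show ?thesis using m by (simp add: divide_simps mult.commute)
  qed
  define T where "T = real m * real J + real p / real q + \<delta>"
  have "0 \<le> real p / real q" by simp
  then have Tgt: "fd c X0 < T" unfolding T_def using mJ \<delta>pos by linarith
  have "0 \<le> fd c X0" unfolding fd_def using c by simp
  then have Tpos: "0 < T" using Tgt by simp
  define xs where "xs = (T / c) powr (1 / (c - 1))"
  have fxs: "fd c xs = T" unfolding xs_def using fd_inverse[OF c(1) Tpos] .
  have xspos: "0 < xs" unfolding xs_def using Tpos c by simp
  have xsX0: "X0 \<le> xs"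
  proof (rule ccontr)
    assume "\<not> X0 \<le> xs"
    then have "fd c xs < fd c X0" using fd_strict[OF c(1) xspos] by simp
    then show False using fxs Tgt by simp
  qed
  have Axs: "c * (c - 1) * xs powr (c - 2) \<le> e0" using X0(2)[OF xsX0] .
  define n0 where "n0 = nat \<lceil>xs\<rceil>"
  have n0: "xs \<le> real n0" "real n0 \<le> xs + 1" unfolding n0_def using xspos by linarith+
  have slope: "T \<le> fd c z \<and> fd c z \<le> T + \<delta>" if z: "xs \<le> z" "z \<le> xs + real M + 1" for z
  proof
    show "T \<le> fd c z" using fd_mono[OF c(1) xspos z(1)] fxs by simp
    have "fd c z \<le> fd c (xs + (real M + 1))" using fd_mono[OF c(1)] z xspos by simp
    also have "\<dots> \<le> fd c xs + c * (c - 1) * xs powr (c - 2) * (real M + 1)"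
      using fd_growth[OF c xspos, of "real M + 1"] by simp
    also have "c * (c - 1) * xs powr (c - 2) * (real M + 1) \<le> e0 * (real M + 1)"
      using Axs by (intro mult_right_mono) auto
    also have "e0 * (real M + 1) \<le> \<delta>"
    proof -
      have "e0 \<le> \<delta> / (real M + 1)" unfolding e0_def by simp
      then have "e0 * (real M + 1) \<le> \<delta> / (real M + 1) * (real M + 1)" by (intro mult_right_mono) auto
      then show ?thesis by simp
    qed
    finally show "fd c z \<le> T + \<delta>" using fxs by simp
  qed
  define g where "g = (\<lambda>l::nat. f (real (n0 + q * l)) - (real m * real J * real q + real p) * real l)"
  have qpos: "0 < real q" using q by simp
  have step: "\<delta> \<le> g (Suc l) - g l \<and> g (Suc l) - g l < \<eta>" if l: "l \<le> L" for l
  proof -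
    define a where "a = real (n0 + q * l)"
    have apos: "0 < a" unfolding a_def using n0 xspos by linarith
    have ab: "a < a + real q" using qpos by simp
    note cb = chord_bounds[OF c(1) apos ab]
    have gd: "g (Suc l) - g l = f (a + real q) - f a - (real m * real J * real q + real p)"
      unfolding g_def a_def f_def by (simp add: algebra_simps)
    have a1: "xs \<le> a" unfolding a_def using n0(1) by (simp add: add_increasing2)
    have "q * l + q \<le> M" unfolding M_def using l by simp
    then have "real (q * l + q) \<le> real M" by (simp only: of_nat_le_iff)
    then have a2: "a + real q \<le> xs + real M + 1" unfolding a_def using n0 by simp
    have sa: "T \<le> fd c a" using slope[of a] a1 a2 qpos by simp
    have sb: "fd c (a + real q) \<le> T + \<delta>" using slope[of "a + real q"] a1 a2 qpos by simp
    have "T * real q \<le> fd c a * real q" using sa qpos by simp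
    then have lo: "T * real q < f (a + real q) - f a" using cb unfolding f_def by simp
    have "fd c (a + real q) * real q \<le> (T + \<delta>) * real q" using sb qpos by (simp add: mult_right_mono)
    then have hi: "f (a + real q) - f a < (T + \<delta>) * real q" using cb unfolding f_def by simp
    have Tq: "T * real q - (real m * real J * real q + real p) = \<delta> * real q"
      unfolding T_def using qpos by (simp add: field_simps)
    have "\<delta> \<le> \<delta> * real q" using \<delta>pos q by simp
    then have s1: "\<delta> \<le> g (Suc l) - g l" using lo Tq gd by linarith
    have "2 * \<delta> * real q \<le> 2 * \<delta> * real k" using \<delta>pos q by simp
    also have "\<dots> < \<eta>" unfolding \<delta>_def \<eta>_def using kpos by (simp add: field_simps power2_eq_square)
    finally have "2 * \<delta> * real q < \<eta>" .
    then have s2: "g (Suc l) - g l < \<eta>" using hi Tq gd by (simp add: algebra_simps)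
    show ?thesis using s1 s2 by simp
  qed
  have gL: "g 0 + 2 \<le> g L"
  proof -
    have "g 0 + \<delta> * real l \<le> g l" if "l \<le> L" for l
      using that
    proof (induction l)
      case 0 then show ?case by simp
    next
      case (Suc l)
      then show ?case using step[of l] by (simp add: algebra_simps)
    qed
    moreover have "2 \<le> \<delta> * real L" using L \<delta>pos by (simp add: field_simps)
    ultimately show ?thesis by fastforce
  qed
  define t0 where "t0 = (real r + 1/2) / real q"
  define y where "y = real_of_int (\<lfloor>g 0\<rfloor> + 1) + t0"
  have t0: "0 \<le> t0" "t0 < 1" unfolding t0_def using rq qpos by (auto simp: field_simps)
  have y: "g 0 < y" "y \<le> g L" unfolding y_def using t0 gL by linarith+
  have st': "g (Suc l) < g l + \<eta>" if "l < L" for l using step[of l] that by simp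
  obtain l where l: "l \<le> L" "y \<le> g l" "g l < y + \<eta>"
    using discrete_ivt[of L g \<eta> y, OF st' y] by blast
  define n where "n = n0 + q * l"
  define Y where "Y = \<lfloor>g 0\<rfloor> + 1 + int ((m * J * q + p) * l)"
  have fn: "f (real n) = real_of_int Y + t0 + (g l - y)"
    unfolding Y_def y_def n_def g_def by (simp add: algebra_simps)
  have \<tau>: "0 \<le> g l - y" "g l - y < \<eta>" using l by auto
  have "q * l \<le> q * L" using l(1) by (rule mult_le_mono2)
  moreover have "q * L \<le> M" unfolding M_def by simp
  ultimately have "q * l \<le> M" by (rule le_trans)
  then have "real (q * l) \<le> real M" by (simp only: of_nat_le_iff)
  then have nrng: "xs \<le> real n" "real n \<le> xs + real M + 1" unfolding n_def using n0
    by (simp_all add: add_increasing2)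
  have npos: "0 < real n" using nrng xspos by linarith
  have sn: "T \<le> fd c (real n)" "fd c (real n) \<le> T + \<delta>" using slope[OF nrng] by auto
  have fnfloor: "\<lfloor>f (real n)\<rfloor> = Y"
  proof -
    have "t0 + \<eta> \<le> 1"
    proof -
      have "\<eta> \<le> 1 / (2 * real q)" unfolding \<eta>_def using q kpos by (simp add: field_simps)
      moreover have "t0 + 1 / (2 * real q) \<le> 1" unfolding t0_def using rq qpos
        by (simp add: field_simps)
      ultimately show ?thesis by simp
    qed
    then show ?thesis unfolding fn using t0 \<tau> by (intro floor_unique) auto
  qed
  have window: "\<lfloor>f (real (n + i))\<rfloor> = Y + int (m * J * i) + int ((p * i + r) div q)" if ik: "i < k" for i
  proof -
    define R where "R = f (real n + real i) - f (real n) - fd c (real n) * real i"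
    have R: "0 \<le> R \<and> R \<le> \<eta>"
    proof (cases "i = 0")
      case True then show ?thesis unfolding R_def using \<eta>pos by simp
    next
      case False
      then have ii: "real n < real n + real i" by simp
      note cb = chord_bounds[OF c(1) npos ii]
      have "fd c (real n + real i) - fd c (real n) \<le> c * (c - 1) * real n powr (c - 2) * real i"
        using fd_growth[OF c npos, of "real i"] by simp
      also have "\<dots> \<le> c * (c - 1) * xs powr (c - 2) * real i"
        using nrng xspos c by (intro mult_right_mono mult_left_mono powr_mono2') auto
      also have "\<dots> \<le> e0 * real k" using Axs ik e0pos by (intro mult_mono) auto
      finally have d1: "fd c (real n + real i) - fd c (real n) \<le> e0 * real k" .
      have "R < (fd c (real n + real i) - fd c (real n)) * real i"
        using cb unfolding R_def f_def by (simp add: algebra_simps)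
      also have "\<dots> \<le> e0 * real k * real k" using d1 ik
        by (intro mult_mono) (auto simp: e0pos less_imp_le)
      also have "\<dots> \<le> \<eta>"
      proof -
        have "e0 \<le> \<eta> / real k ^ 2" unfolding e0_def by simp
        then have "e0 * (real k * real k) \<le> \<eta> / real k ^ 2 * (real k * real k)"
          by (intro mult_right_mono) auto
        then show ?thesis using kpos by (simp add: power2_eq_square mult.assoc)
      qed
      finally show ?thesis using cb unfolding R_def f_def by (simp add: algebra_simps)
    qed
    define \<theta> where "\<theta> = fd c (real n) - T"
    have \<theta>: "0 \<le> \<theta>" "\<theta> \<le> \<delta>" using sn unfolding \<theta>_def by auto
    define E where "E = (g l - y) + (\<delta> + \<theta>) * real i + R"
    have E0: "0 \<le> E" unfolding E_def using \<tau> \<theta> R \<delta>pos by simp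
    have "(\<delta> + \<theta>) * real i \<le> (2 * \<delta>) * real k" using \<theta> ik \<delta>pos by (intro mult_mono) auto
    then have "E < \<eta> + 2 * \<delta> * real k + \<eta>" unfolding E_def using \<tau> R by simp
    also have "\<dots> \<le> 1 / (2 * real q)"
      unfolding \<eta>_def \<delta>_def using kpos q by (simp add: field_simps power2_eq_square)
    finally have E1: "E < 1 / (2 * real q)" .
    have e1: "f (real (n + i)) = f (real n) + fd c (real n) * real i + R" unfolding R_def by simp
    have e2: "fd c (real n) * real i = real m * real J * real i + real p / real q * real i + (\<delta> + \<theta>) * real i"
      unfolding \<theta>_def T_def by (simp add: algebra_simps)
    have e3: "(real p * real i + real r + 1/2) / real q = real p / real q * real i + t0"
      unfolding t0_def using qpos by (simp add: field_simps)
    have "f (real (n + i)) = real_of_int Y + real m * real J * real i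
        + (real p * real i + real r + 1/2) / real q + E"
      unfolding e1 e2 e3 fn E_def by simp
    from floor_target[OF _ E0 E1 this] q show ?thesis by simp
  qed
  show ?thesis
  proof (intro exI allI impI)
    fix i assume ik: "i < k"
    have "\<lfloor>real (n + i) powr c\<rfloor> = Y + int m * (int J * int i) + int ((p * i + r) div q)"
      using window[OF ik] unfolding f_def by simp
    moreover have "\<lfloor>real n powr c\<rfloor> = Y" using fnfloor unfolding f_def by simp
    moreover have "(Y + int ((p * i + r) div q) + int m * (int J * int i)) mod int m
        = (Y + int ((p * i + r) div q)) mod int m" by (rule mod_mult_self2)
    ultimately show "\<lfloor>real (n + i) powr c\<rfloor> mod int m = (\<lfloor>real n powr c\<rfloor> + int ((p * i + r) div q)) mod int m"
      by (metis add.commute add.left_commute)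
  qed
qed

lemma sum_split_nat:
  fixes f :: "nat \<Rightarrow> nat"
  shows "(\<Sum>i<a + b. f i) = (\<Sum>i<a. f i) + (\<Sum>i<b. f (a + i))"
  by (induction b) (simp_all add: add.assoc)

lemma slope_eq:
  fixes p q p' q' r r' k :: nat
  assumes q: "0 < q" "0 < q'" and k: "q + q' \<le> k"
  and H: "\<And>i. i < k \<Longrightarrow> (p * i + r) div q = (p' * i + r') div q'"
  shows "q' * p = q * p'"
proof -
  define F where "F = (\<lambda>i. (p' * i + r') div q')"
  have F1: "F (q + i) = F i + p" if "i < q'" for i
  proof -
    have "F (q + i) = (p * (q + i) + r) div q" using H[of "q + i"] that k unfolding F_def by simp
    also have "p * (q + i) + r = (p * i + r) + q * p" by (simp add: algebra_simps)
    also have "(\<dots>) div q = (p * i + r) div q + p" using q by simp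
    also have "(p * i + r) div q = F i" using H[of i] that k unfolding F_def by simp
    finally show ?thesis .
  qed
  have F2: "F (q' + i) = F i + p'" for i
  proof -
    have "p' * (q' + i) + r' = (p' * i + r') + q' * p'" by (simp add: algebra_simps)
    then show ?thesis unfolding F_def using q by (simp only: div_mult_self2)
  qed
  have "(\<Sum>i<q + q'. F i) = (\<Sum>i<q. F i) + (\<Sum>i<q'. F (q + i))" by (rule sum_split_nat)
  also have "(\<Sum>i<q'. F (q + i)) = (\<Sum>i<q'. F i) + q' * p"
    using F1 by (simp add: sum.distrib)
  finally have A: "(\<Sum>i<q + q'. F i) = (\<Sum>i<q. F i) + (\<Sum>i<q'. F i) + q' * p" by simp
  have "(\<Sum>i<q' + q. F i) = (\<Sum>i<q'. F i) + (\<Sum>i<q. F (q' + i))" by (rule sum_split_nat)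
  also have "(\<Sum>i<q. F (q' + i)) = (\<Sum>i<q. F i) + q * p'"
    using F2 by (simp add: sum.distrib)
  finally have B: "(\<Sum>i<q' + q. F i) = (\<Sum>i<q'. F i) + (\<Sum>i<q. F i) + q * p'" by simp
  show ?thesis using A B by (simp add: add.commute)
qed

lemma triple_inj:
  fixes p q p' q' r r' k :: nat
  assumes q: "0 < q" "0 < q'" and k: "q + q' \<le> k"
  and cop: "coprime p q" "coprime p' q'" and r: "r < q" "r' < q'"
  and H: "\<And>i. i < k \<Longrightarrow> (p * i + r) div q = (p' * i + r') div q'"
  shows "p = p' \<and> q = q' \<and> r = r'"
proof -
  have e: "q' * p = q * p'" by (rule slope_eq[OF q k H])
  have "q dvd q' * p" using e by simp
  then have d1: "q dvd q'" using cop(1) by (simp add: coprime_commute coprime_dvd_mult_left_iff)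
  have "q' dvd q * p'" using e by (metis dvd_triv_left)
  then have d2: "q' dvd q" using cop(2) by (simp add: coprime_commute coprime_dvd_mult_left_iff)
  have qq: "q = q'" using d1 d2 by (simp add: dvd_antisym)
  have pp: "p = p'" using e qq q by simp
  have rr: "r = r'"
  proof (rule ccontr)
    assume ne: "r \<noteq> r'"
    have main: False if lt: "s < s'" and s': "s' < q" and Hs: "\<And>i. i < k \<Longrightarrow> (p * i + s) div q = (p * i + s') div q" for s s'
    proof -
      obtain x where x: "[p * x = Suc 0] (mod q)" using cong_solve_coprime_nat[OF cop(1)] by blast
      define i where "i = (x * (q - s')) mod q"
      have iq: "i < q" unfolding i_def using q by simp
      have "[p * i = p * (x * (q - s'))] (mod q)" unfolding i_def
        by (intro cong_mult cong_refl) (simp add: cong_def)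
      also have "p * (x * (q - s')) = (p * x) * (q - s')" by (simp add: mult.assoc)
      also have "[(p * x) * (q - s') = Suc 0 * (q - s')] (mod q)" by (intro cong_mult x cong_refl)
      finally have "[p * i + s' = (q - s') + s'] (mod q)" by (simp add: cong_add_rcancel_nat)
      then have "(p * i + s') mod q = 0" using s' by (simp add: cong_def)
      then obtain t where t: "p * i + s' = q * t" by (auto elim!: mod_0_imp_dvd[THEN dvdE])
      have tpos: "1 \<le> t" using t lt by (cases t) auto
      have a: "(p * i + s') div q = t" using t q by simp
      have "p * i + s = q * (t - 1) + (q - (s' - s))" using t lt s' tpos
        by (simp add: algebra_simps diff_mult_distrib2)
      then have b: "(p * i + s) div q = t - 1" using q lt by simp
      have "(p * i + s) div q = (p * i + s') div q" using Hs[of i] iq q k by simp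
      then show False using a b tpos by simp
    qed
    have Hr: "(p * i + r) div q = (p * i + r') div q" if "i < k" for i using H[OF that] pp qq by simp
    consider "r < r'" | "r' < r" using ne by linarith
    then show False
    proof cases
      case 1 then show False using main[of r r'] Hr r qq by simp
    next
      case 2 then show False using main[of r' r] Hr r qq by simp
    qed
  qed
  show ?thesis using pp qq rr by simp
qed

lemma incr_eq:
  fixes D1 D2 :: "nat \<Rightarrow> int" and m :: nat
  assumes m: "m \<ge> 2" and z: "D1 0 = D2 0"
  and i1: "\<And>i. D1 (Suc i) - D1 i \<in> {0, 1}" and i2: "\<And>i. D2 (Suc i) - D2 i \<in> {0, 1}"
  and md: "\<And>i. i < k \<Longrightarrow> D1 i mod int m = D2 i mod int m"
  shows "i < k \<Longrightarrow> D1 i = D2 i"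
proof (induction i)
  case 0 then show ?case using z by simp
next
  case (Suc i)
  then have IH: "D1 i = D2 i" by simp
  define x where "x = D1 (Suc i) - D2 (Suc i)"
  have x: "-1 \<le> x \<and> x \<le> 1" using i1[of i] i2[of i] IH unfolding x_def by auto
  have "int m dvd x" unfolding x_def using md[OF Suc.prems] by (simp add: mod_eq_dvd_iff)
  then obtain y where y: "x = int m * y" by blast
  have "y = 0"
  proof (rule ccontr)
    assume "y \<noteq> 0"
    then have "\<bar>x\<bar> \<ge> int m" unfolding y using m by (simp add: abs_mult)
    then show False using x m by linarith
  qed
  then show ?case using y unfolding x_def by simp
qed

lemma div_incr:
  fixes p q r :: nat assumes "p < q"
  shows "int ((p * Suc i + r) div q) - int ((p * i + r) div q) \<in> {0, 1}"
proof -
  have a: "(p * i + r) div q \<le> (p * Suc i + r) div q" by (intro div_le_mono) simp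
  have "(p * Suc i + r) div q \<le> (p * i + r + q) div q" using assms by (intro div_le_mono) simp
  also have "\<dots> = (p * i + r) div q + 1" using assms by simp
  finally show ?thesis using a by auto
qed

lemma sum_pron: fixes K :: nat shows "3 * (\<Sum>q\<in>{1..K}. (q - 1) * q) = (K - 1) * K * (K + 1)"
proof (induction K)
  case 0 then show ?case by simp
next
  case (Suc K)
  have "3 * (\<Sum>q\<in>{1..Suc K}. (q - 1) * q) = 3 * (\<Sum>q\<in>{1..K}. (q - 1) * q) + 3 * (K * Suc K)"
    by (simp add: sum.atLeast1_atMost_eq algebra_simps)
  also have "\<dots> = (K - 1) * K * (K + 1) + 3 * (K * Suc K)" using Suc by simp
  also have "\<dots> = K * (K + 1) * (K + 2)" by (cases K) (simp_all add: algebra_simps)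
  finally show ?case by simp
qed

lemma sum_pron_real: fixes K :: nat shows "real (\<Sum>q\<in>{1..K}. (q - 1) * q) = (real K ^ 3 - real K) / 3"
proof -
  have "real (3 * (\<Sum>q\<in>{1..K}. (q - 1) * q)) = real ((K - 1) * K * (K + 1))" using sum_pron by metis
  moreover have "real ((K - 1) * K * (K + 1)) = real K ^ 3 - real K"
    by (cases K) (simp_all add: algebra_simps power3_eq_cube of_nat_diff)
  ultimately show ?thesis by simp
qed

lemma sum_inv_sq: "n \<ge> 2 \<Longrightarrow> (\<Sum>d\<in>{2..n}. 1 / real d ^ 2) \<le> 3/4 - 1 / real n"
proof (induction n rule: dec_induct)
  case base then show ?case by simp
next
  case (step n)
  have "(\<Sum>d\<in>{2..Suc n}. 1 / real d ^ 2) = (\<Sum>d\<in>{2..n}. 1 / real d ^ 2) + 1 / real (Suc n) ^ 2"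
    using step by (simp add: sum.atLeast_Suc_atMost_Suc_shift)
  also have "\<dots> \<le> 3/4 - 1 / real n + 1 / real (Suc n) ^ 2" using step by simp
  also have "\<dots> \<le> 3/4 - 1 / real (Suc n)"
  proof -
    have n: "real n \<ge> 2" using step by simp
    have "1 / real (Suc n) ^ 2 \<le> 1 / (real n * real (Suc n))"
      using n by (intro divide_left_mono) (auto simp: power2_eq_square)
    also have "\<dots> = 1 / real n - 1 / real (Suc n)" using n by (simp add: field_simps)
    finally show ?thesis by simp
  qed
  finally show ?case .
qed

lemma sum_inv_sq': "(\<Sum>d\<in>{2..n}. 1 / real d ^ 2) \<le> 3/4"
proof (cases "n \<ge> 2")
  case True then show ?thesis using sum_inv_sq[OF True] by (smt (verit) of_nat_0_le_iff divide_nonneg_nonneg)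
next
  case False then have "{2..n} = {}" by auto
  then show ?thesis by simp
qed

definition Good :: "nat \<Rightarrow> (nat \<times> nat \<times> nat) set" where
  "Good K = {(p, q, r). 1 \<le> p \<and> p < q \<and> q \<le> K \<and> r < q \<and> coprime p q}"

definition AllT :: "nat \<Rightarrow> (nat \<times> nat \<times> nat) set" where
  "AllT K = {(p, q, r). 1 \<le> p \<and> p < q \<and> q \<le> K \<and> r < q}"

lemma card_AllT: "card (AllT K) = (\<Sum>q\<in>{1..K}. (q - 1) * q)"
proof -
  have "AllT K = (\<lambda>(q, p, r). (p, q, r)) ` (SIGMA q:{1..K}. {1..<q} \<times> {..<q})"
    unfolding AllT_def by (auto simp: image_iff)
  moreover have "inj_on (\<lambda>(q, p, r). (p, q, r)) (SIGMA q:{1..K}. {1..<q} \<times> {..<q})"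
    by (auto simp: inj_on_def)
  ultimately have "card (AllT K) = card (SIGMA q:{1..K}. {1..<q} \<times> {..<q})" by (simp add: card_image)
  also have "\<dots> = (\<Sum>q\<in>{1..K}. card ({1..<q} \<times> {..<q}))" by (simp add: card_SigmaI)
  also have "\<dots> = (\<Sum>q\<in>{1..K}. (q - 1) * q)" by (simp add: card_cartesian_product)
  finally show ?thesis .
qed

definition Bd :: "nat \<Rightarrow> nat \<Rightarrow> (nat \<times> nat \<times> nat) set" where
  "Bd K d = (\<lambda>(s, t, r). (d * t, d * s, r)) ` (SIGMA s:{1..K div d}. {1..<s} \<times> {..<d * s})"

lemma card_Bd:
  assumes "d \<ge> 1"
  shows "real (card (Bd K d)) \<le> real K ^ 3 / (3 * real d ^ 2)"
proof -
  define S where "S = K div d"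
  have "card (Bd K d) \<le> card (SIGMA s:{1..S}. {1..<s} \<times> {..<d * s})"
    unfolding Bd_def S_def by (rule card_image_le) simp
  also have "\<dots> = (\<Sum>s\<in>{1..S}. (s - 1) * (d * s))" by (simp add: card_SigmaI card_cartesian_product)
  also have "\<dots> = d * (\<Sum>s\<in>{1..S}. (s - 1) * s)" by (simp add: sum_distrib_left algebra_simps)
  finally have "real (card (Bd K d)) \<le> real (d * (\<Sum>s\<in>{1..S}. (s - 1) * s))"
    by (simp only: of_nat_le_iff)
  also have "\<dots> = real d * ((real S ^ 3 - real S) / 3)"
    by (simp only: of_nat_mult sum_pron_real)
  also have "\<dots> \<le> real d * (real S ^ 3 / 3)" by (intro mult_left_mono) auto
  also have "\<dots> \<le> real K ^ 3 / (3 * real d ^ 2)"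
  proof -
    have "d * S \<le> K" unfolding S_def by (simp add: mult.commute)
    then have dS: "real d * real S \<le> real K" by (simp only: of_nat_le_iff of_nat_mult[symmetric])
    then have "(real d * real S) ^ 3 \<le> real K ^ 3" by (intro power_mono) auto
    then have "real d ^ 2 * (real d * real S ^ 3) \<le> real K ^ 3"
      by (simp add: power_mult_distrib power3_eq_cube power2_eq_square algebra_simps)
    then show ?thesis using assms by (simp add: field_simps)
  qed
  finally show ?thesis .
qed

lemma bad_sub: "AllT K - Good K \<subseteq> (\<Union>d\<in>{2..K}. Bd K d)"
proof
  fix x assume x: "x \<in> AllT K - Good K"
  obtain p q r where xe: "x = (p, q, r)" by (cases x)
  have a: "1 \<le> p" "p < q" "q \<le> K" "r < q" using x unfolding xe AllT_def by auto
  have nc: "\<not> coprime p q" using x a unfolding xe Good_def by auto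
  define d where "d = gcd p q"
  have d0: "d \<noteq> 0" unfolding d_def using a by simp
  have d1: "d \<noteq> 1" unfolding d_def using nc coprime_iff_gcd_eq_1[of p q] by blast
  have dp: "d dvd p" "d dvd q" unfolding d_def by auto
  have dq: "d \<le> q" using dp(2) a by (intro dvd_imp_le) auto
  obtain t where t: "p = d * t" using dp(1) by blast
  obtain s where s: "q = d * s" using dp(2) by blast
  have tpos: "1 \<le> t" using t a by (cases t) auto
  have ts: "t < s" using t s a d0 by simp
  have "d * s div d \<le> K div d" using s a by (intro div_le_mono) simp
  then have sK: "s \<le> K div d" using d0 by simp
  have r2: "r < d * s" using a s by simp
  have mem: "(s, t, r) \<in> (SIGMA s:{1..K div d}. {1..<s} \<times> {..<d * s})"
    using tpos ts sK r2 by auto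
  have "x = (\<lambda>(s, t, r). (d * t, d * s, r)) (s, t, r)" using xe t s by simp
  then have "x \<in> Bd K d" unfolding Bd_def using mem by blast
  moreover have "d \<in> {2..K}" using d0 d1 dq a by auto
  ultimately show "x \<in> (\<Union>d\<in>{2..K}. Bd K d)" by blast
qed

lemma card_Good: "real (card (Good K)) \<ge> real K ^ 3 / 12 - real K / 3"
proof -
  have finA: "finite (AllT K)"
    by (rule finite_subset[of _ "{..K} \<times> {..K} \<times> {..K}"]) (auto simp: AllT_def)
  have sub: "Good K \<subseteq> AllT K" unfolding Good_def AllT_def by auto
  have "card (AllT K) = card (Good K) + card (AllT K - Good K)"
    using card_Diff_subset[OF finite_subset[OF sub finA] sub] card_mono[OF finA sub] by simp
  moreover have "card (AllT K - Good K) \<le> card (\<Union>d\<in>{2..K}. Bd K d)"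
    by (rule card_mono[OF _ bad_sub]) (auto simp: Bd_def)
  moreover have "card (\<Union>d\<in>{2..K}. Bd K d) \<le> (\<Sum>d\<in>{2..K}. card (Bd K d))" by (rule card_UN_le) simp
  ultimately have "card (AllT K) \<le> card (Good K) + (\<Sum>d\<in>{2..K}. card (Bd K d))"
    by linarith
  then have "real (card (AllT K)) \<le> real (card (Good K) + (\<Sum>d\<in>{2..K}. card (Bd K d)))"
    by (simp only: of_nat_le_iff)
  then have "real (card (AllT K)) \<le> real (card (Good K)) + (\<Sum>d\<in>{2..K}. real (card (Bd K d)))"
    by simp
  also have "(\<Sum>d\<in>{2..K}. real (card (Bd K d))) \<le> (\<Sum>d\<in>{2..K}. real K ^ 3 / 3 * (1 / real d ^ 2))"
    by (intro sum_mono) (use card_Bd in auto)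
  also have "\<dots> = real K ^ 3 / 3 * (\<Sum>d\<in>{2..K}. 1 / real d ^ 2)" by (simp add: sum_distrib_left)
  also have "\<dots> \<le> real K ^ 3 / 3 * (3/4)" by (intro mult_left_mono sum_inv_sq') auto
  finally show ?thesis unfolding card_AllT sum_pron_real by simp
qed

lemma lower_big:
  fixes c :: real and m k :: nat
  assumes c: "1 < c" "c < 2" and m: "m \<ge> 2" and k: "k \<ge> 1"
  shows "real (card (Good ((k - 1) div 2))) \<le> real (subword_complexity (\<lambda>n::nat. nat \<lfloor>(real n) powr c\<rfloor> mod m) k)"
proof -
  define K where "K = (k - 1) div 2"
  define u where "u = (\<lambda>n::nat. nat \<lfloor>(real n) powr c\<rfloor> mod m)"
  have Kk: "2 * K \<le> k - 1" unfolding K_def by simp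
  have ex: "\<exists>n::nat. \<forall>i<k. \<lfloor>real (n + i) powr c\<rfloor> mod int m
            = (\<lfloor>real n powr c\<rfloor> + int ((fst t * i + snd (snd t)) div fst (snd t))) mod int m"
    if "t \<in> Good K" for t
  proof -
    obtain p q r where t: "t = (p, q, r)" by (cases t)
    have a: "1 \<le> p" "p < q" "q \<le> K" "r < q" using that unfolding t Good_def by auto
    have m1: "m \<ge> 1" using m by simp
    have q1: "1 \<le> q" using a by simp
    have qk: "q \<le> k" using a Kk by simp
    show ?thesis unfolding t using realize[OF c m1 k q1 qk a(2) a(4)] by simp
  qed
  define nn where "nn = (\<lambda>t. SOME n::nat. \<forall>i<k. \<lfloor>real (n + i) powr c\<rfloor> mod int m
            = (\<lfloor>real n powr c\<rfloor> + int ((fst t * i + snd (snd t)) div fst (snd t))) mod int m)"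
  have nn: "\<lfloor>real (nn t + i) powr c\<rfloor> mod int m
            = (\<lfloor>real (nn t) powr c\<rfloor> + int ((fst t * i + snd (snd t)) div fst (snd t))) mod int m"
    if "t \<in> Good K" "i < k" for t i
    using someI_ex[OF ex[OF that(1)]] that(2) unfolding nn_def by blast
  define blk where "blk = (\<lambda>t. map (\<lambda>i. u (nn t + i)) [0..<k])"
  have uform: "int (u (nn t + i)) = (\<lfloor>real (nn t) powr c\<rfloor> + int ((fst t * i + snd (snd t)) div fst (snd t))) mod int m"
    if "t \<in> Good K" "i < k" for t i
  proof -
    have "int (u (nn t + i)) = \<lfloor>real (nn t + i) powr c\<rfloor> mod int m"
      unfolding u_def by (simp add: zmod_int)
    then show ?thesis using nn[OF that] by simp
  qed
  have inj: "inj_on blk (Good K)"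
  proof (rule inj_onI)
    fix t1 t2 assume t1: "t1 \<in> Good K" and t2: "t2 \<in> Good K" and eq: "blk t1 = blk t2"
    obtain p q r where t1e: "t1 = (p, q, r)" by (cases t1)
    obtain p' q' r' where t2e: "t2 = (p', q', r')" by (cases t2)
    have a1: "1 \<le> p" "p < q" "q \<le> K" "r < q" "coprime p q" using t1 unfolding t1e Good_def by auto
    have a2: "1 \<le> p'" "p' < q'" "q' \<le> K" "r' < q'" "coprime p' q'" using t2 unfolding t2e Good_def by auto
    define F1 where "F1 = \<lfloor>real (nn t1) powr c\<rfloor>"
    define F2 where "F2 = \<lfloor>real (nn t2) powr c\<rfloor>"
    define E1 where "E1 = (\<lambda>i. F1 mod int m + int ((p * i + r) div q))"
    define E2 where "E2 = (\<lambda>i. F2 mod int m + int ((p' * i + r') div q'))"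
    have ueq: "u (nn t1 + i) = u (nn t2 + i)" if "i < k" for i
      using arg_cong[OF eq, of "\<lambda>xs. xs ! i"] that unfolding blk_def by simp
    have cong: "(F1 + int ((p * i + r) div q)) mod int m = (F2 + int ((p' * i + r') div q')) mod int m"
      if "i < k" for i
      using uform[OF t1 that] uform[OF t2 that] ueq[OF that] unfolding t1e t2e F1_def F2_def by simp
    have Fm: "F1 mod int m = F2 mod int m" using cong[of 0] k a1 a2 by simp
    have z: "E1 0 = E2 0" using Fm a1 a2 unfolding E1_def E2_def by simp
    have md: "E1 i mod int m = E2 i mod int m" if "i < k" for i
      using cong[OF that] unfolding E1_def E2_def by (simp add: mod_add_left_eq)
    have i1: "E1 (Suc i) - E1 i \<in> {0, 1}" for i unfolding E1_def using div_incr[OF a1(2)] by simp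
    have i2: "E2 (Suc i) - E2 i \<in> {0, 1}" for i unfolding E2_def using div_incr[OF a2(2)] by simp
    have "E1 i = E2 i" if "i < k" for i using incr_eq[OF m z i1 i2 md that] .
    then have H: "(p * i + r) div q = (p' * i + r') div q'" if "i < k" for i
      using that Fm unfolding E1_def E2_def by simp
    have "q + q' \<le> k" using a1 a2 Kk by simp
    moreover have "0 < q" "0 < q'" using a1 a2 by auto
    ultimately have "p = p' \<and> q = q' \<and> r = r'"
      using triple_inj[OF _ _ _ a1(5) a2(5) a1(4) a2(4) H] by blast
    then show "t1 = t2" unfolding t1e t2e by simp
  qed
  have sub: "blk ` Good K \<subseteq> {map (\<lambda>i. u (n + i)) [0..<k] | n. True}" unfolding blk_def by auto
  have "card (Good K) = card (blk ` Good K)" using inj by (simp add: card_image)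
  also have "\<dots> \<le> card {map (\<lambda>i. u (n + i)) [0..<k] | n. True}"
    by (rule card_mono[OF _ sub]) (use sc_finite[of m c k] m in \<open>simp add: u_def\<close>)
  finally show ?thesis unfolding K_def u_def subword_complexity_def by simp
qed

lemma sc_pos:
  fixes c :: real and m k :: nat
  assumes m: "m \<ge> 2"
  shows "1 \<le> subword_complexity (\<lambda>n::nat. nat \<lfloor>(real n) powr c\<rfloor> mod m) k"
proof -
  have "{map (\<lambda>i. (\<lambda>n::nat. nat \<lfloor>(real n) powr c\<rfloor> mod m) (n + i)) [0..<k] | n. True} \<noteq> {}" by auto
  then show ?thesis unfolding subword_complexity_def using sc_finite[of m c k] m
    by (simp add: Suc_leI card_gt_0_iff)
qed

lemma lower_final:
  fixes c :: real and m :: nat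
  assumes c: "1 < c" "c < 2" and m: "m \<ge> 2"
  shows "\<exists>C2::real. C2 > 0 \<and> (\<forall>k::nat. k \<ge> 1 \<longrightarrow>
     real (subword_complexity (\<lambda>n::nat. nat \<lfloor>(real n) powr c\<rfloor> mod m) k) \<ge> C2 * (real k) ^ 3)"
proof (intro exI conjI allI impI)
  show "(0::real) < 1 / 648" by simp
  fix k :: nat assume k: "k \<ge> 1"
  define L where "L = real (subword_complexity (\<lambda>n::nat. nat \<lfloor>(real n) powr c\<rfloor> mod m) k)"
  show "1 / 648 * real k ^ 3 \<le> real (subword_complexity (\<lambda>n::nat. nat \<lfloor>(real n) powr c\<rfloor> mod m) k)"
  proof (cases "k \<ge> 7")
    case False
    then have "real k \<le> 6" by simp
    then have "real k ^ 3 \<le> 6 ^ 3" by (intro power_mono) auto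
    moreover have "1 \<le> L" unfolding L_def using sc_pos[OF m, of c k] by simp
    ultimately show ?thesis unfolding L_def[symmetric] by simp
  next
    case True
    define K where "K = (k - 1) div 2"
    have K3: "3 \<le> K" unfolding K_def using True by simp
    have Kk: "real k \<le> 3 * real K"
    proof -
      have "k \<le> 3 * K" unfolding K_def using True by simp
      then have "real k \<le> real (3 * K)" by (simp only: of_nat_le_iff)
      then show ?thesis by simp
    qed
    have "real K ^ 3 / 24 \<le> real K ^ 3 / 12 - real K / 3"
    proof -
      have "8 * real K \<le> real K ^ 3"
      proof -
        have "(3::real) \<le> real K" using K3 by simp
        then have "(3::real) ^ 2 \<le> real K ^ 2" by (intro power_mono) auto
        then have "9 \<le> real K ^ 2" by simp
        then have "real K * 9 \<le> real K * real K ^ 2" by (intro mult_left_mono) auto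
        then show ?thesis by (simp add: power2_eq_square power3_eq_cube)
      qed
      then show ?thesis by simp
    qed
    also have "\<dots> \<le> real (card (Good K))" by (rule card_Good)
    also have "\<dots> \<le> L" unfolding L_def K_def by (rule lower_big[OF c m k])
    finally have A: "real K ^ 3 / 24 \<le> L" .
    have "real k ^ 3 \<le> (3 * real K) ^ 3" using Kk by (intro power_mono) auto
    then have "1 / 648 * real k ^ 3 \<le> 1 / 648 * (27 * real K ^ 3)" by (simp add: power_mult_distrib)
    also have "\<dots> = real K ^ 3 / 24" by simp
    finally show ?thesis using A unfolding L_def by simp
  qed
qed

theorem theorem3:
  fixes c :: real and m :: nat
  assumes "1 < c" "c < 2" "m \<ge> 2"
  defines "u \<equiv> (\<lambda>n::nat. nat \<lfloor>(real n) powr c\<rfloor> mod m)"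
  shows "(\<forall>r::real. r > max (4 / (2 - c)) 6 \<longrightarrow>
            (\<exists>C1::real. \<forall>k::nat. k \<ge> 1 \<longrightarrow> real (subword_complexity u k) \<le> C1 * (real k) powr r))
       \<and> (\<exists>C2::real. C2 > 0 \<and> (\<forall>k::nat. k \<ge> 1 \<longrightarrow> real (subword_complexity u k) \<ge> C2 * (real k) ^ 3))"
  unfolding u_def using upper_final[OF assms(1,2,3)] lower_final[OF assms(1,2,3)] by blast

end
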